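(* For an integer $r\ge 5$, let $freq_r(\mathrm{FL})$ and $freq_r(\mathrm{1P})$ denote the number of $7$-card subsets of the $4r$-card deck (defined in the context) that contain a flush, respectively a one-pair hand. Then: (i) there exists $N$ such that $freq_r(\mathrm{FL}) > freq_r(\mathrm{1P})$ for all $r \ge N$ (flushes eventually rank below one-pair hands in the frequency ranking); and (ii) if $r\ge 5$ and $freq_r(\mathrm{FL}) > freq_r(\mathrm{1P})$, then $r \ge 307$.
   Context: Fix an integer $r\ge 5$. The deck has $4r$ cards: each card has one of $4$ suits and one of $r$ ranks $1,2,\dots,r$, each (suit, rank) pair occurring exactly once. Let $S_r$ be the set of all $7$-card subsets of this deck (so $|S_r|=\binom{4r}{7}$). A $5$-card set is a flush (FL) if all five cards have the same suit. A $5$-card set contains a one-pair (1P) if two of its cards have the same rank. For a hand type $h$ and $s\in S_r$, say $h\in s$ if some $5$-card subset of $s$ is of type $h$ (counting is inclusive: a $5$-card set may be of several types simultaneously). Define $freq_r(h)=|\{s\in S_r : h\in s\}|$. The frequency ranking places type $h_0$ above $h_1$ exactly when $freq_r(h_0)<freq_r(h_1)$. *)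

theory Defs
  imports Main
begin

text \<open>A card is a pair (suit, rank); suits are 0..3, ranks are 1..r.\<close>
type_synonym card = "nat \<times> nat"

definition deck :: "nat \<Rightarrow> card set" where
  "deck r = {0..<4} \<times> {1..r}"

definition hands7 :: "nat \<Rightarrow> card set set" where
  "hands7 r = {s. s \<subseteq> deck r \<and> card s = 7}"

definition flush :: "card set \<Rightarrow> bool" where
  "flush H \<longleftrightarrow> card H = 5 \<and> (\<exists>c. \<forall>x\<in>H. fst x = c)"

definition one_pair :: "card set \<Rightarrow> bool" where
  "one_pair H \<longleftrightarrow> card H = 5 \<and> (\<exists>x\<in>H. \<exists>y\<in>H. x \<noteq> y \<and> snd x = snd y)"

definition contains_type :: "(card set \<Rightarrow> bool) \<Rightarrow> card set \<Rightarrow> bool" where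
  "contains_type h s \<longleftrightarrow> (\<exists>H. H \<subseteq> s \<and> card H = 5 \<and> h H)"

definition freq :: "nat \<Rightarrow> (card set \<Rightarrow> bool) \<Rightarrow> nat" where
  "freq r h = card {s \<in> hands7 r. contains_type h s}"

end

theory Submission
  imports Defs Complex_Main "HOL-Library.FuncSet"
begin

lemma finite_deck: "finite (deck r)" by (simp add: deck_def)
lemma card_deck: "card (deck r) = 4 * r" by (simp add: deck_def card_cartesian_product)
definition suit :: "nat \<Rightarrow> nat \<Rightarrow> card set" where "suit r c = {c} \<times> {1..r}"

lemma split_count:
  assumes fA: "finite A" and fB: "finite B" and dj: "A \<inter> B = {}" and kn: "k \<le> n"
  shows "card {s. s \<subseteq> A \<union> B \<and> card s = n \<and> card (s \<inter> A) = k}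
         = (card A choose k) * (card B choose (n - k))"
proof -
  let ?X = "{X. X \<subseteq> A \<and> card X = k}" and ?Y = "{Y. Y \<subseteq> B \<and> card Y = n - k}"
  have inj: "inj_on (\<lambda>(X,Y). X \<union> Y) (?X \<times> ?Y)"
  proof (rule inj_onI)
    fix p q assume p: "p \<in> ?X \<times> ?Y" and q: "q \<in> ?X \<times> ?Y"
      and e: "(\<lambda>(X,Y). X \<union> Y) p = (\<lambda>(X,Y). X \<union> Y) q"
    obtain X Y where pp: "p = (X,Y)" by (cases p)
    obtain X' Y' where qq: "q = (X',Y')" by (cases q)
    have h: "X \<subseteq> A" "Y \<subseteq> B" "X' \<subseteq> A" "Y' \<subseteq> B" using p q pp qq by auto
    have e2: "X \<union> Y = X' \<union> Y'" using e pp qq by simp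
    have "X = (X \<union> Y) \<inter> A" using h(1,2) dj by auto
    also have "\<dots> = (X' \<union> Y') \<inter> A" using e2 by simp
    also have "\<dots> = X'" using h(3,4) dj by auto
    finally have "X = X'" .
    have "Y = (X \<union> Y) \<inter> B" using h(1,2) dj by auto
    also have "\<dots> = (X' \<union> Y') \<inter> B" using e2 by simp
    also have "\<dots> = Y'" using h(3,4) dj by auto
    finally have "Y = Y'" .
    show "p = q" using pp qq \<open>X = X'\<close> \<open>Y = Y'\<close> by simp
  qed
  have img: "(\<lambda>(X,Y). X \<union> Y) ` (?X \<times> ?Y) = {s. s \<subseteq> A \<union> B \<and> card s = n \<and> card (s \<inter> A) = k}"
  proof (rule set_eqI, rule iffI)
    fix s assume "s \<in> (\<lambda>(X,Y). X \<union> Y) ` (?X \<times> ?Y)"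
    then obtain p where pS: "p \<in> {X. X \<subseteq> A \<and> card X = k} \<times> {Y. Y \<subseteq> B \<and> card Y = n - k}" and sp: "s = (\<lambda>(X,Y). X \<union> Y) p" by (rule imageE)
    obtain X Y where pp: "p = (X,Y)" by (cases p)
    have s: "s = X \<union> Y" "X \<subseteq> A" "card X = k" "Y \<subseteq> B" "card Y = n - k" using pS sp pp by auto
    have fX: "finite X" using s(2) fA finite_subset by blast
    have fY: "finite Y" using s(4) fB finite_subset by blast
    have dXY: "X \<inter> Y = {}" using s(2,4) dj by blast
    have "card (X \<union> Y) = card X + card Y" using card_Un_disjoint[OF fX fY dXY] .
    then have c1: "card s = n" using s(1,3,5) kn by simp
    have c2: "s \<inter> A = X" using s(1,2,4) dj by blast
    have c3: "s \<subseteq> A \<union> B" using s(1,2,4) by blast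
    show "s \<in> {s. s \<subseteq> A \<union> B \<and> card s = n \<and> card (s \<inter> A) = k}" using c1 c2 c3 s(3) by simp
  next
    fix s assume s: "s \<in> {s. s \<subseteq> A \<union> B \<and> card s = n \<and> card (s \<inter> A) = k}"
    have s1: "s \<subseteq> A \<union> B" and s2: "card s = n" and s3: "card (s \<inter> A) = k"
      using s by (simp_all only: mem_Collect_eq)
    have fAB: "finite (A \<union> B)" using fA fB by simp
    have fs: "finite s" using finite_subset[OF s1 fAB] .
    have eq: "(s \<inter> A) \<union> (s \<inter> B) = s" using s1 by blast
    have dj2: "(s \<inter> A) \<inter> (s \<inter> B) = {}" using dj by blast
    have "card ((s \<inter> A) \<union> (s \<inter> B)) = card (s \<inter> A) + card (s \<inter> B)"
      by (rule card_Un_disjoint) (use fs dj2 in simp_all)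
    then have "card s = card (s \<inter> A) + card (s \<inter> B)" by (simp only: eq)
    then have c: "card (s \<inter> B) = n - k" using s2 s3 by linarith
    have "s \<inter> A \<in> ?X" using s3 by blast
    moreover have "s \<inter> B \<in> ?Y" using c by blast
    ultimately have m: "(s \<inter> A, s \<inter> B) \<in> ?X \<times> ?Y" by blast
    have "s = (\<lambda>(X,Y). X \<union> Y) (s \<inter> A, s \<inter> B)" using eq by simp
    then show "s \<in> (\<lambda>(X,Y). X \<union> Y) ` (?X \<times> ?Y)" using m by (rule image_eqI)
  qed
  have "card {s. s \<subseteq> A \<union> B \<and> card s = n \<and> card (s \<inter> A) = k} = card (?X \<times> ?Y)"
    using card_image[OF inj] img by (simp only:)
  also have "\<dots> = card ?X * card ?Y" by (rule card_cartesian_product)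
  also have "\<dots> = (card A choose k) * (card B choose (n - k))"
    using n_subsets[OF fA, of k] n_subsets[OF fB, of "n - k"] by (simp only:)
  finally show ?thesis .
qed


lemma ext5:
  assumes "finite s" "card s = 7" "x \<in> s" "y \<in> s" "x \<noteq> y"
  shows "\<exists>H. {x,y} \<subseteq> H \<and> H \<subseteq> s \<and> card H = 5"
proof -
  have "card (s - {x,y}) = 5" using assms by (simp add: card_Diff_subset)
  then obtain T where T: "T \<subseteq> s - {x,y}" "card T = 3" "finite T"
    using obtain_subset_with_card_n[of 3 "s - {x,y}"] by auto
  have "card (T \<union> {x,y}) = 5"
    using T assms by (subst card_Un_disjoint) auto
  then show ?thesis using T assms by (intro exI[of _ "T \<union> {x,y}"]) auto
qed

lemma pair_char:
  assumes "s \<in> hands7 r"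
  shows "contains_type one_pair s \<longleftrightarrow> \<not> inj_on snd s"
proof
  assume "contains_type one_pair s"
  then obtain H x y where "H \<subseteq> s" "x \<in> H" "y \<in> H" "x \<noteq> y" "snd x = snd y"
    unfolding contains_type_def one_pair_def by blast
  then show "\<not> inj_on snd s" unfolding inj_on_def by blast
next
  assume "\<not> inj_on snd s"
  then obtain x y where xy: "x \<in> s" "y \<in> s" "x \<noteq> y" "snd x = snd y" unfolding inj_on_def by blast
  have fs: "finite s" "card s = 7" using assms finite_deck finite_subset unfolding hands7_def by auto
  obtain H where "{x,y} \<subseteq> H" "H \<subseteq> s" "card H = 5" using ext5[OF fs xy(1-3)] by blast
  then show "contains_type one_pair s" using xy unfolding contains_type_def one_pair_def by blast
qed

lemma suit_sub: "c < 4 \<Longrightarrow> suit r c \<subseteq> deck r" unfolding suit_def deck_def by auto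
lemma card_suit: "card (suit r c) = r" unfolding suit_def by (simp add: card_cartesian_product)

lemma flush_char:
  assumes "s \<in> hands7 r"
  shows "contains_type flush s \<longleftrightarrow> (\<exists>c\<in>{0..<4}. 5 \<le> card (s \<inter> suit r c))"
proof
  assume "contains_type flush s"
  then obtain H c where H: "H \<subseteq> s" "card H = 5" "\<forall>x\<in>H. fst x = c"
    unfolding contains_type_def flush_def by blast
  have sd: "s \<subseteq> deck r" using assms unfolding hands7_def by auto
  have "H \<subseteq> s \<inter> suit r c"
  proof
    fix x assume x: "x \<in> H"
    then have "x \<in> deck r" "fst x = c" using H sd by auto
    then have "x \<in> suit r c" unfolding suit_def deck_def by (cases x) auto
    then show "x \<in> s \<inter> suit r c" using x H by auto
  qed
  moreover have "finite (s \<inter> suit r c)" unfolding suit_def by simp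
  ultimately have "5 \<le> card (s \<inter> suit r c)" using H card_mono by metis
  moreover have "c < 4"
  proof -
    have "H \<noteq> {}" using H by auto
    then obtain x where x: "x \<in> H" by auto
    then have "x \<in> deck r" "fst x = c" using H sd by auto
    then show ?thesis unfolding deck_def by (cases x) auto
  qed
  ultimately show "\<exists>c\<in>{0..<4}. 5 \<le> card (s \<inter> suit r c)" by auto
next
  assume "\<exists>c\<in>{0..<4}. 5 \<le> card (s \<inter> suit r c)"
  then obtain c where c: "5 \<le> card (s \<inter> suit r c)" by auto
  then obtain T where T: "T \<subseteq> s \<inter> suit r c" "card T = 5" using obtain_subset_with_card_n by metis
  then have "\<forall>x\<in>T. fst x = c" unfolding suit_def by auto
  then have "flush T" using T unfolding flush_def by blast
  then show "contains_type flush s" unfolding contains_type_def using T by blast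
qed

lemma card_E:
  assumes c: "c < 4"
  shows "card {s \<in> hands7 r. 5 \<le> card (s \<inter> suit r c)} =
     (r choose 5) * (3*r choose 2) + (r choose 6) * (3*r choose 1) + (r choose 7) * (3*r choose 0)"
proof -
  let ?A = "suit r c" and ?B = "deck r - suit r c"
  define G where "G k = {s. s \<subseteq> ?A \<union> ?B \<and> card s = 7 \<and> card (s \<inter> ?A) = k}" for k
  have un: "?A \<union> ?B = deck r" using suit_sub[OF c] by auto
  have fin: "finite ?A" "finite ?B" using finite_deck unfolding suit_def by auto
  have cB: "card ?B = 3 * r" using card_Diff_subset[OF fin(1) suit_sub[OF c]] card_deck card_suit by simp
  have eq: "{s \<in> hands7 r. 5 \<le> card (s \<inter> suit r c)} = (\<Union>k\<in>{5,6,7}. G k)"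
  proof (rule set_eqI, rule iffI)
    fix s assume s: "s \<in> {s \<in> hands7 r. 5 \<le> card (s \<inter> suit r c)}"
    then have fs: "finite s" "card s = 7" using finite_deck finite_subset unfolding hands7_def by auto
    have "card (s \<inter> ?A) \<le> 7" using card_mono[OF fs(1), of "s \<inter> ?A"] fs by auto
    then have "card (s \<inter> ?A) \<in> {5,6,7}" using s by auto
    then show "s \<in> (\<Union>k\<in>{5,6,7}. G k)" using s un unfolding G_def hands7_def by auto
  next
    fix s assume "s \<in> (\<Union>k\<in>{5,6,7}. G k)"
    then show "s \<in> {s \<in> hands7 r. 5 \<le> card (s \<inter> suit r c)}" using un unfolding G_def hands7_def by auto
  qed
  have finG: "finite (G k)" for k
  proof -
    have "G k \<subseteq> Pow (deck r)" unfolding G_def using un by blast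
    then show ?thesis using finite_deck finite_subset by blast
  qed
  have "card (\<Union>k\<in>{5,6,7}. G k) = (\<Sum>k\<in>{5,6,7}. card (G k))"
    by (rule card_UN_disjoint) (use finG in \<open>auto simp: G_def\<close>)
  also have "\<dots> = (\<Sum>k\<in>{5,6,7::nat}. (r choose k) * (3*r choose (7 - k)))"
    by (rule sum.cong) (auto simp: G_def split_count[OF fin] card_suit cB simp del: Un_Diff_cancel)
  finally show ?thesis using eq by simp
qed

lemma freq_flush:
  "freq r flush = 4 * ((r choose 5) * (3*r choose 2) + (r choose 6) * (3*r choose 1) + (r choose 7) * (3*r choose 0))"
proof -
  define E where "E c = {s \<in> hands7 r. 5 \<le> card (s \<inter> suit r c)}" for c
  have "{s \<in> hands7 r. contains_type flush s} = (\<Union>c\<in>{0..<4}. E c)"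
    using flush_char unfolding E_def by blast
  moreover have "card (\<Union>c\<in>{0..<4}. E c) = (\<Sum>c\<in>{0..<4}. card (E c))"
  proof (rule card_UN_disjoint)
    show "finite {0..<4::nat}" by simp
    show "\<forall>i\<in>{0..<4}. finite (E i)"
      unfolding E_def hands7_def using finite_deck by (auto intro: finite_subset[of _ "Pow (deck r)"])
    show "\<forall>i\<in>{0..<4}. \<forall>j\<in>{0..<4}. i \<noteq> j \<longrightarrow> E i \<inter> E j = {}"
    proof (intro ballI impI)
      fix i j :: nat assume "i \<noteq> j"
      show "E i \<inter> E j = {}"
      proof (rule ccontr)
        assume "E i \<inter> E j \<noteq> {}"
        then obtain s where s: "s \<in> hands7 r" "5 \<le> card (s \<inter> suit r i)" "5 \<le> card (s \<inter> suit r j)"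
          unfolding E_def by auto
        have fs: "finite s" "card s = 7" using s finite_deck finite_subset unfolding hands7_def by auto
        have dj: "(s \<inter> suit r i) \<inter> (s \<inter> suit r j) = {}" using \<open>i \<noteq> j\<close> unfolding suit_def by auto
        have "card ((s \<inter> suit r i) \<union> (s \<inter> suit r j)) = card (s \<inter> suit r i) + card (s \<inter> suit r j)"
          by (rule card_Un_disjoint) (use fs dj in auto)
        moreover have "card ((s \<inter> suit r i) \<union> (s \<inter> suit r j)) \<le> 7"
          using card_mono[OF fs(1), of "(s \<inter> suit r i) \<union> (s \<inter> suit r j)"] fs by auto
        ultimately show False using s by linarith
      qed
    qed
  qed
  ultimately show ?thesis unfolding freq_def E_def using card_E by simp
qed
definition gr :: "nat set \<Rightarrow> (nat \<Rightarrow> nat) \<Rightarrow> card set" where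
  "gr R f = (\<lambda>x. (f x, x)) ` R"

lemma gr_inj: "inj_on (gr R) (R \<rightarrow>\<^sub>E {0..<4})"
proof (rule inj_onI)
  fix f g assume f: "f \<in> R \<rightarrow>\<^sub>E {0..<4}" and g: "g \<in> R \<rightarrow>\<^sub>E {0..<4}" and e: "gr R f = gr R g"
  have ef: "f \<in> extensional R" and eg: "g \<in> extensional R" using f g by (simp_all add: PiE_iff)
  show "f = g"
  proof (rule extensionalityI[OF ef eg])
    fix x assume "x \<in> R"
    then have "(f x, x) \<in> gr R g" using e unfolding gr_def by auto
    then show "f x = g x" unfolding gr_def by auto
  qed
qed

lemma card_distinct:
  "card {s. s \<subseteq> deck r \<and> card s = 7 \<and> inj_on snd s} = (r choose 7) * 4^7"
proof -
  define Rs where "Rs = {R. R \<subseteq> {1..r} \<and> card R = (7::nat)}"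
  have eq: "{s. s \<subseteq> deck r \<and> card s = 7 \<and> inj_on snd s} = (\<Union>R\<in>Rs. gr R ` (R \<rightarrow>\<^sub>E {0..<4}))"
  proof (rule set_eqI, rule iffI)
    fix s assume s: "s \<in> {s. s \<subseteq> deck r \<and> card s = 7 \<and> inj_on snd s}"
    then have sd: "s \<subseteq> deck r" and cs: "card s = 7" and inj: "inj_on snd s" by auto
    define R where "R = snd ` s"
    define f where "f = (\<lambda>x\<in>R. fst (the_inv_into s snd x))"
    have R: "R \<in> Rs" using sd cs inj card_image unfolding R_def deck_def Rs_def by fastforce
    have fx: "f (snd y) = fst y" if "y \<in> s" for y
      using that inj the_inv_into_f_f[OF inj that] unfolding f_def R_def by auto
    have f: "f \<in> R \<rightarrow>\<^sub>E {0..<4}"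
    proof
      fix x assume "x \<in> R"
      then obtain y where "y \<in> s" "x = snd y" unfolding R_def by auto
      then show "f x \<in> {0..<4}" using fx sd unfolding deck_def by force
    next
      show "\<And>x. x \<notin> R \<Longrightarrow> f x = undefined" unfolding f_def by auto
    qed
    have "s = gr R f"
    proof
      show "s \<subseteq> gr R f"
      proof
        fix y assume "y \<in> s"
        then have "y = (f (snd y), snd y)" using fx by simp
        then show "y \<in> gr R f" unfolding gr_def R_def using \<open>y \<in> s\<close> by blast
      qed
      show "gr R f \<subseteq> s" unfolding gr_def R_def using fx by auto
    qed
    then show "s \<in> (\<Union>R\<in>Rs. gr R ` (R \<rightarrow>\<^sub>E {0..<4}))" using R f by blast
  next
    fix s assume "s \<in> (\<Union>R\<in>Rs. gr R ` (R \<rightarrow>\<^sub>E {0..<4}))"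
    then obtain R f where R: "R \<subseteq> {1..r}" "card R = 7" and f: "f \<in> R \<rightarrow>\<^sub>E {0..<4}" and s: "s = gr R f"
      unfolding Rs_def by blast
    have "s \<subseteq> deck r" using R f unfolding s gr_def deck_def by auto
    moreover have "card s = 7" unfolding s gr_def using R by (subst card_image) (auto simp: inj_on_def)
    moreover have "inj_on snd s" unfolding s gr_def by (auto simp: inj_on_def)
    ultimately show "s \<in> {s. s \<subseteq> deck r \<and> card s = 7 \<and> inj_on snd s}" by auto
  qed
  have "card (\<Union>R\<in>Rs. gr R ` (R \<rightarrow>\<^sub>E {0..<4})) = (\<Sum>R\<in>Rs. card (gr R ` (R \<rightarrow>\<^sub>E {0..<4})))"
  proof (rule card_UN_disjoint)
    show "finite Rs" by (rule finite_subset[of _ "Pow {1..r}"]) (auto simp: Rs_def)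
    show "\<forall>R\<in>Rs. finite (gr R ` (R \<rightarrow>\<^sub>E {0..<4}))"
      unfolding Rs_def by (auto intro!: finite_imageI finite_PiE dest: finite_subset)
    show "\<forall>R\<in>Rs. \<forall>R'\<in>Rs. R \<noteq> R' \<longrightarrow> gr R ` (R \<rightarrow>\<^sub>E {0..<4}) \<inter> gr R' ` (R' \<rightarrow>\<^sub>E {0..<4}) = {}"
    proof (intro ballI impI)
      fix R R' :: "nat set" assume "R \<noteq> R'"
      have sg: "snd ` gr R f = R" for R :: "nat set" and f unfolding gr_def by force
      show "gr R ` (R \<rightarrow>\<^sub>E {0..<4}) \<inter> gr R' ` (R' \<rightarrow>\<^sub>E {0..<4}) = {}"
      proof (rule ccontr)
        assume "gr R ` (R \<rightarrow>\<^sub>E {0..<4}) \<inter> gr R' ` (R' \<rightarrow>\<^sub>E {0..<4}) \<noteq> {}"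
        then obtain f g where "gr R f = gr R' g" by blast
        then have "snd ` gr R f = snd ` gr R' g" by simp
        then show False using sg \<open>R \<noteq> R'\<close> by metis
      qed
    qed
  qed
  also have "\<dots> = (\<Sum>R\<in>Rs. 4^7)"
  proof (rule sum.cong[OF refl])
    fix R assume R: "R \<in> Rs"
    then have "finite R" unfolding Rs_def using finite_subset by auto
    then show "card (gr R ` (R \<rightarrow>\<^sub>E {0..<4})) = 4^7"
      using R unfolding Rs_def by (simp add: card_image[OF gr_inj] card_PiE)
  qed
  also have "\<dots> = (r choose 7) * 4^7" by (simp add: n_subsets Rs_def)
  finally show ?thesis using eq by simp
qed


lemma ch: "real (m choose k) = (\<Prod>i=0..<k. real m - real i) / fact k"
  using gbinomial_mult_fact[of k "real m"] binomial_gbinomial[of m k, where 'a=real]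
  by (simp add: field_simps)

lemma ch7: "real (m choose 7) = real m*(real m-1)*(real m-2)*(real m-3)*(real m-4)*(real m-5)*(real m-6)/5040"
  by (simp add: ch numeral_eq_Suc prod.atLeast0_lessThan_Suc fact_numeral algebra_simps)
lemma ch6: "real (m choose 6) = real m*(real m-1)*(real m-2)*(real m-3)*(real m-4)*(real m-5)/720"
  by (simp add: ch numeral_eq_Suc prod.atLeast0_lessThan_Suc fact_numeral algebra_simps)
lemma ch5: "real (m choose 5) = real m*(real m-1)*(real m-2)*(real m-3)*(real m-4)/120"
  by (simp add: ch numeral_eq_Suc prod.atLeast0_lessThan_Suc fact_numeral algebra_simps)
lemma ch2: "real (m choose 2) = real m*(real m-1)/2"
  by (simp add: ch numeral_eq_Suc prod.atLeast0_lessThan_Suc fact_numeral algebra_simps)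

definition Qp :: "real \<Rightarrow> real" where
 "Qp x = 844*x^5 - 266360*x^4 + 2458460*x^3 - 9464080*x^2 + 17099856*x - 11796480"

lemma ident:
  fixes r :: nat
  defines "F \<equiv> 4 * ((r choose 5) * (3*r choose 2) + (r choose 6) * (3*r choose 1) + (r choose 7) * (3*r choose 0))"
  shows "5040 * (real F - (real (4*r choose 7) - 4^7 * real (r choose 7))) = real r * (real r - 1) * Qp (real r)"
  unfolding F_def Qp_def by (simp add: ch7 ch6 ch5 ch2 field_simps power_def)

lemma Qp_pos: assumes "x \<ge> 307" shows "Qp x > 0"
proof -
  define t where "t = x - 307"
  have t: "t \<ge> 0" using assms t_def by simp
  have "Qp x = 5828826265920 + 7347143678656*t + 95836494660*t^2 + 470829940*t^3 + 1029180*t^4 + 844*t^5"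
    unfolding Qp_def t_def by (simp add: power_def algebra_simps) 
  moreover have "0 \<le> 7347143678656*t + 95836494660*t^2 + 470829940*t^3 + 1029180*t^4 + 844*t^5"
    using t by simp
  ultimately show ?thesis by linarith
qed


definition Qi :: "int \<Rightarrow> int" where
 "Qi x = 844*x^5 - 266360*x^4 + 2458460*x^3 - 9464080*x^2 + 17099856*x - 11796480"
fun chk :: "nat \<Rightarrow> bool" where
 "chk 0 = True"
| "chk (Suc n) = ((5 \<le> Suc n \<longrightarrow> Qi (int (Suc n)) < 0) \<and> chk n)"
lemma chk_ok: "chk 306" by code_simp
lemma chk_imp: "chk n \<Longrightarrow> 5 \<le> x \<Longrightarrow> x \<le> n \<Longrightarrow> Qi (int x) < 0"
  by (induction n) (auto simp: le_Suc_eq simp del: of_nat_Suc)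

lemma Qp_neg: assumes "5 \<le> x" "x < 307" shows "Qp (real x) < 0"
proof -
  have "Qi (int x) < 0" using chk_imp[OF chk_ok] assms by simp
  moreover have "Qp (real x) = real_of_int (Qi (int x))" unfolding Qp_def Qi_def by simp
  ultimately show ?thesis by simp
qed

lemma freq_pair:
  "real (freq r one_pair) = real (4*r choose 7) - 4^7 * real (r choose 7)"
proof -
  define Dd where "Dd = {s. s \<subseteq> deck r \<and> card s = 7 \<and> inj_on snd s}"
  have "{s \<in> hands7 r. contains_type one_pair s} = hands7 r - Dd"
    using pair_char unfolding Dd_def hands7_def by blast
  moreover have "Dd \<subseteq> hands7 r" unfolding Dd_def hands7_def by blast
  moreover have "finite (hands7 r)" unfolding hands7_def
    by (rule finite_subset[of _ "Pow (deck r)"]) (auto simp: finite_deck)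
  ultimately have "freq r one_pair = card (hands7 r) - card Dd"
    unfolding freq_def by (simp add: card_Diff_subset finite_subset)
  moreover have "card Dd \<le> card (hands7 r)" using \<open>Dd \<subseteq> hands7 r\<close> \<open>finite (hands7 r)\<close> card_mono by blast
  moreover have "card (hands7 r) = 4*r choose 7" unfolding hands7_def
    using n_subsets[OF finite_deck] card_deck by simp
  moreover have "card Dd = (r choose 7) * 4^7" unfolding Dd_def by (rule card_distinct)
  ultimately show ?thesis by (simp add: of_nat_diff)
qed

lemma key:
  assumes "5 \<le> r"
  shows "freq r flush > freq r one_pair \<longleftrightarrow> Qp (real r) > 0"
proof -
  have e: "5040 * (real (freq r flush) - real (freq r one_pair)) = real r * (real r - 1) * Qp (real r)"
    using ident[of r] unfolding freq_flush freq_pair by simp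
  have p: "real r * (real r - 1) > 0" using assms by simp
  have "freq r flush > freq r one_pair \<longleftrightarrow> real (freq r flush) - real (freq r one_pair) > 0" by simp
  also have "\<dots> \<longleftrightarrow> real r * (real r - 1) * Qp (real r) > 0" unfolding e[symmetric] by simp
  also have "\<dots> \<longleftrightarrow> Qp (real r) > 0" using p mult_pos_pos zero_less_mult_pos by blast
  finally show ?thesis .
qed

theorem fact1:
  shows "(\<exists>N. \<forall>r\<ge>N. freq r flush > freq r one_pair) \<and>
         (\<forall>r\<ge>5. freq r flush > freq r one_pair \<longrightarrow> r \<ge> 307)"
proof
  show "\<exists>N. \<forall>r\<ge>N. freq r flush > freq r one_pair"
  proof (rule exI[of _ 307], intro allI impI)
    fix r :: nat assume r: "307 \<le> r"
    then have "Qp (real r) > 0" using Qp_pos by simp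
    moreover have "5 \<le> r" using r by simp
    ultimately show "freq r flush > freq r one_pair" using key by blast
  qed
  show "\<forall>r\<ge>5. freq r flush > freq r one_pair \<longrightarrow> r \<ge> 307"
  proof (intro allI impI)
    fix r :: nat assume r: "5 \<le> r" "freq r flush > freq r one_pair"
    show "r \<ge> 307"
    proof (rule ccontr)
      assume "\<not> r \<ge> 307"
      then have "Qp (real r) < 0" using Qp_neg r by simp
      then show False using key[OF r(1)] r(2) by linarith
    qed
  qed
qed

end
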